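(* Let $\mathcal{E}=\{\eta_{i},\rho_{i}\}_{i\in\mathbb{N}_{n}}$ be an ensemble and let $H\in\mathbb{H}(\mathcal{E})$ satisfy $\Tr H=q_{\sf G}(\mathcal{E})$. Then $\Pi(\mathcal{E})H\Pi(\mathcal{E})=H$, where $\Pi(\mathcal{E})$ is the orthogonal projection onto the support of $\rho_0=\sum_i\eta_i\rho_i$.
   Context: $\mathbb{N}_{n}=\{1,\ldots,n\}$. $\mathcal{H}$ is a finite-dimensional complex Hilbert space, $\mathbb{H}$ the Hermitian operators on it, $\mathbb{H}_{+}$ the positive-semidefinite ones. An ensemble: density operators $\rho_i$ with probabilities $\eta_i>0$ summing to $1$. A measurement is $\{M_{?}\}\cup\{M_{i}\}_{i\in\mathbb{N}_{n}}\subseteq\mathbb{H}_+$ summing to the identity. $\mathcal{C}_{i}(\mathcal{E})$ is the maximum of $\eta_{i}\Tr(\rho_{i}M_{i})/\Tr(\rho_{0}M_{i})$ over measurements with $\Tr(\rho_{0}M_{i})>0$. $\mathbb{M}_{i}(\mathcal{E})=\{E\in\mathbb{H}_{+}\mid\Tr[(\mathcal{C}_{i}(\mathcal{E})\rho_{0}-\eta_{i}\rho_{i})E]=0\}$, $\mathbb{M}_{i}^{*}(\mathcal{E})=\{E\in\mathbb{H}\mid\Tr(EF)\ge0\ \forall F\in\mathbb{M}_{i}(\mathcal{E})\}$, $\mathbb{H}(\mathcal{E})=\{H\in\mathbb{H}_{+}\mid H-\eta_{i}\rho_{i}\in\mathbb{M}_{i}^{*}(\mathcal{E})\ \forall i\in\mathbb{N}_n\}$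 and $q_{\sf G}(\mathcal{E})=\min_{H\in\mathbb{H}(\mathcal{E})}\Tr H$. *)

theory Defs
  imports "HOL-Analysis.Analysis"
begin

type_synonym 'd cop = "complex^'d^'d"

definition adj :: "'d::finite cop \<Rightarrow> 'd cop" where
  "adj A = (\<chi> i j. cnj (A $ j $ i))"

definition tr :: "'d::finite cop \<Rightarrow> complex" where
  "tr A = (\<Sum>i\<in>UNIV. A $ i $ i)"

definition hermitian :: "'d::finite cop \<Rightarrow> bool" where
  "hermitian A \<longleftrightarrow> adj A = A"

definition psd :: "'d::finite cop \<Rightarrow> bool" where
  "psd A \<longleftrightarrow> hermitian A \<and>
     (\<forall>v::complex^'d. 0 \<le> Re (\<Sum>i\<in>UNIV. cnj (v $ i) * (A *v v) $ i))"

definition density :: "'d::finite cop \<Rightarrow> bool" where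
  "density A \<longleftrightarrow> psd A \<and> tr A = 1"

definition is_ensemble :: "nat \<Rightarrow> (nat \<Rightarrow> real) \<Rightarrow> (nat \<Rightarrow> 'd::finite cop) \<Rightarrow> bool" where
  "is_ensemble n \<eta> \<rho> \<longleftrightarrow> (\<forall>i\<in>{1..n}. \<eta> i > 0 \<and> density (\<rho> i)) \<and> (\<Sum>i=1..n. \<eta> i) = 1"

definition rho0 :: "nat \<Rightarrow> (nat \<Rightarrow> real) \<Rightarrow> (nat \<Rightarrow> 'd::finite cop) \<Rightarrow> 'd cop" where
  "rho0 n \<eta> \<rho> = (\<Sum>i=1..n. \<eta> i *\<^sub>R \<rho> i)"

text \<open>Measurement {M?} \<union> {M_i}: M0 is the inconclusive element M?.\<close>
definition is_measurement :: "nat \<Rightarrow> 'd::finite cop \<Rightarrow> (nat \<Rightarrow> 'd cop) \<Rightarrow> bool" where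
  "is_measurement n M0 M \<longleftrightarrow> psd M0 \<and> (\<forall>i\<in>{1..n}. psd (M i)) \<and> M0 + (\<Sum>i=1..n. M i) = mat 1"

definition Cmax :: "nat \<Rightarrow> (nat \<Rightarrow> real) \<Rightarrow> (nat \<Rightarrow> 'd::finite cop) \<Rightarrow> nat \<Rightarrow> real" where
  "Cmax n \<eta> \<rho> i = Sup {\<eta> i * Re (tr (\<rho> i ** M i)) / Re (tr (rho0 n \<eta> \<rho> ** M i)) | M0 M.
       is_measurement n M0 M \<and> Re (tr (rho0 n \<eta> \<rho> ** M i)) > 0}"

definition Mset :: "nat \<Rightarrow> (nat \<Rightarrow> real) \<Rightarrow> (nat \<Rightarrow> 'd::finite cop) \<Rightarrow> nat \<Rightarrow> 'd cop set" where
  "Mset n \<eta> \<rho> i = {E. psd E \<and>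
     tr ((Cmax n \<eta> \<rho> i *\<^sub>R rho0 n \<eta> \<rho> - \<eta> i *\<^sub>R \<rho> i) ** E) = 0}"

definition Mdual :: "nat \<Rightarrow> (nat \<Rightarrow> real) \<Rightarrow> (nat \<Rightarrow> 'd::finite cop) \<Rightarrow> nat \<Rightarrow> 'd cop set" where
  "Mdual n \<eta> \<rho> i = {E. hermitian E \<and> (\<forall>F\<in>Mset n \<eta> \<rho> i. 0 \<le> Re (tr (E ** F)))}"

definition Hset :: "nat \<Rightarrow> (nat \<Rightarrow> real) \<Rightarrow> (nat \<Rightarrow> 'd::finite cop) \<Rightarrow> 'd cop set" where
  "Hset n \<eta> \<rho> = {H. psd H \<and> (\<forall>i\<in>{1..n}. H - \<eta> i *\<^sub>R \<rho> i \<in> Mdual n \<eta> \<rho> i)}"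

definition qG :: "nat \<Rightarrow> (nat \<Rightarrow> real) \<Rightarrow> (nat \<Rightarrow> 'd::finite cop) \<Rightarrow> real" where
  "qG n \<eta> \<rho> = Inf ((\<lambda>H. Re (tr H)) ` Hset n \<eta> \<rho>)"

definition orth_proj_onto :: "'d::finite cop \<Rightarrow> (complex^'d) set \<Rightarrow> bool" where
  "orth_proj_onto P S \<longleftrightarrow> hermitian P \<and> P ** P = P \<and> range (\<lambda>v. P *v v) = S"

text \<open>Support of an operator: its range (for a positive operator, the orthocomplement of its kernel).\<close>
definition supp :: "'d::finite cop \<Rightarrow> (complex^'d) set" where
  "supp A = range (\<lambda>v. A *v v)"

end

theory Submission imports Defs begin

definition ip :: "complex^'d::finite \<Rightarrow> complex^'d \<Rightarrow> complex" where
  "ip u v = (\<Sum>i\<in>UNIV. cnj (u$i) * v$i)"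

lemma psd_iff: "psd A \<longleftrightarrow> hermitian A \<and> (\<forall>v. 0 \<le> Re (ip v (A *v v)))"
  by (simp add: psd_def ip_def)

lemma adj_nth[simp]: "adj A $ i $ j = cnj (A $ j $ i)" by (simp add: adj_def)
lemma adj_adj[simp]: "adj (adj A) = A" by (simp add: vec_eq_iff)
lemma adj_mult: "adj (A ** B) = adj B ** adj A"
  by (simp add: vec_eq_iff matrix_matrix_mult_def mult.commute)
lemma adj_add: "adj (A + B) = adj A + adj B" by (simp add: vec_eq_iff)
lemma adj_diff: "adj (A - B) = adj A - adj B" by (simp add: vec_eq_iff)
lemma adj_scaleR: "adj (c *\<^sub>R A) = c *\<^sub>R adj A" by (simp add: vec_eq_iff)
lemma adj_sum: "adj (sum f S) = sum (\<lambda>x. adj (f x)) S" by (simp add: vec_eq_iff)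
lemma adj_mat1: "adj (mat 1) = mat 1" by (simp add: vec_eq_iff mat_def)

lemma ip_adj: "ip u (A *v v) = ip (adj A *v u) v"
proof -
  have "ip u (A *v v) = (\<Sum>i\<in>UNIV. \<Sum>j\<in>UNIV. cnj (u$i) * (A$i$j * v$j))"
    by (simp add: ip_def matrix_vector_mult_def sum_distrib_left)
  also have "\<dots> = (\<Sum>j\<in>UNIV. \<Sum>i\<in>UNIV. cnj (u$i) * (A$i$j * v$j))"
    by (rule sum.swap)
  also have "\<dots> = ip (adj A *v u) v"
    by (simp add: ip_def matrix_vector_mult_def sum_distrib_left sum_distrib_right mult_ac)
  finally show ?thesis .
qed

lemma ip_add_left: "ip (u + w) v = ip u v + ip w v"
  by (simp add: ip_def sum.distrib distrib_right)
lemma ip_add_right: "ip v (u + w) = ip v u + ip v w"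
  by (simp add: ip_def sum.distrib distrib_left)
lemma ip_smult_left: "ip (c *s u) v = cnj c * ip u v"
  by (simp add: ip_def sum_distrib_left mult_ac)
lemma ip_smult_right: "ip u (c *s v) = c * ip u v"
  by (simp add: ip_def sum_distrib_left mult_ac)
lemma ip_scaleR_right: "ip u (c *\<^sub>R v) = c *\<^sub>R ip u v"
  by (simp add: ip_def scaleR_sum_right)
lemma ip_sum_right: "ip u (sum f S) = (\<Sum>x\<in>S. ip u (f x))"
  by (simp add: ip_def sum_distrib_left sum.swap[of _ UNIV S])
lemma ip_cnj: "ip u v = cnj (ip v u)"
  by (simp add: ip_def mult.commute)
lemma ip_self_zero: "ip u u = 0 \<Longrightarrow> u = 0"
proof -
  assume h: "ip u u = 0"
  have e: "ip u u = of_real (\<Sum>i\<in>UNIV. (cmod (u$i))\<^sup>2)"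
    unfolding ip_def of_real_sum by (rule sum.cong) (simp, metis complex_norm_square mult.commute)
  hence "(\<Sum>i\<in>UNIV. (cmod (u$i))\<^sup>2) = 0" using h by (metis of_real_eq_0_iff)
  hence "\<forall>i\<in>UNIV. (cmod (u$i))\<^sup>2 = 0"
    by (subst sum_nonneg_eq_0_iff[symmetric]) auto
  thus "u = 0" by (simp add: vec_eq_iff)
qed

lemma smult_mv: "(A::complex^'n^'m) *v (c *s v) = c *s (A *v v)"
  by (simp add: vec_eq_iff matrix_vector_mult_def sum_distrib_left mult.left_commute)

lemma real_quad:
  fixes a b :: real
  assumes "\<forall>t. 0 \<le> 2*t*a + t*t*b"
  shows "a = 0"
proof (rule ccontr)
  assume a: "a \<noteq> 0"
  define s where "s = 1 / (\<bar>b\<bar> + 1)"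
  have s0: "s > 0" by (simp add: s_def)
  have sb: "s * b < 2"
  proof -
    have "s * b \<le> s * \<bar>b\<bar>" using s0 by (simp add: mult_left_mono)
    also have "\<dots> < 1" by (simp add: s_def)
    finally show ?thesis by simp
  qed
  define t0 where "t0 = - (a * s)"
  have "0 \<le> 2 * t0 * a + t0 * t0 * b" using assms by blast
  also have "\<dots> = (a*a) * s * (s*b - 2)" by (simp add: t0_def algebra_simps)
  also have "\<dots> < 0"
  proof -
    have aa: "a*a > 0" using a by (auto simp: zero_less_mult_iff linorder_neq_iff)
    show ?thesis using mult_pos_neg[OF mult_pos_pos[OF aa s0]] sb by simp
  qed
  finally show False by simp
qed

lemma psd_zero:
  assumes "psd A" "Re (ip w (A *v w)) = 0"
  shows "A *v w = 0"
proof -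
  have h: "adj A = A" and nn: "\<And>v. 0 \<le> Re (ip v (A *v v))" using assms(1) by (auto simp: psd_iff hermitian_def)
  have key: "Re (ip u (A *v w)) = 0" for u
  proof -
    have "\<forall>t. 0 \<le> 2*t*Re (ip u (A *v w)) + t*t*Re (ip u (A *v u))"
    proof
      fix t :: real
      let ?c = "complex_of_real t"
      have "ip (w + ?c *s u) (A *v (w + ?c *s u)) =
          ip w (A *v w) + ?c * ip w (A *v u) + ?c * ip u (A *v w) + ?c * ?c * ip u (A *v u)"
        by (simp add: matrix_vector_right_distrib ip_add_left ip_add_right smult_mv ip_smult_left ip_smult_right algebra_simps)
      moreover have "ip w (A *v u) = cnj (ip u (A *v w))"
        by (metis ip_adj ip_cnj h)
      ultimately have "Re (ip (w + ?c *s u) (A *v (w + ?c *s u))) = 2*t*Re (ip u (A *v w)) + t*t*Re (ip u (A *v u))"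
        using assms(2) by simp
      thus "0 \<le> 2*t*Re (ip u (A *v w)) + t*t*Re (ip u (A *v u))" using nn by metis
    qed
    thus ?thesis by (rule real_quad)
  qed
  have "ip u (A *v w) = 0" for u
  proof -
    have "Re (ip (\<i> *s u) (A *v w)) = 0" by (rule key)
    hence "Im (ip u (A *v w)) = 0" by (simp add: ip_smult_left)
    thus ?thesis using key[of u] by (simp add: complex_eq_iff)
  qed
  thus ?thesis using ip_self_zero by blast
qed


lemma tr_add: "tr (A + B) = tr A + tr B" by (simp add: tr_def sum.distrib)
lemma tr_diff: "tr (A - B) = tr A - tr B" by (simp add: tr_def sum_subtractf)
lemma tr_comm: "tr (A ** B) = tr (B ** A)"
proof -
  have "tr (A ** B) = (\<Sum>i\<in>UNIV. \<Sum>k\<in>UNIV. A$i$k * B$k$i)"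
    by (simp add: tr_def matrix_matrix_mult_def)
  also have "\<dots> = (\<Sum>k\<in>UNIV. \<Sum>i\<in>UNIV. A$i$k * B$k$i)"
    by (rule sum.swap)
  also have "\<dots> = tr (B ** A)"
    by (simp add: tr_def matrix_matrix_mult_def mult.commute)
  finally show ?thesis .
qed

lemma mv_axis: "((A::complex^'n^'m) *v axis k 1) $ i = A $ i $ k"
  by (simp add: matrix_vector_mult_def axis_def if_distrib cong: if_cong)

lemma ip_axis: "ip (axis k 1) x = x $ k"
proof -
  have "\<And>i. cnj (axis k 1 $ i) * x $ i = (if i = k then x $ k else 0)" by (simp add: axis_def)
  thus ?thesis unfolding ip_def by simp
qed

lemma tr_ip: "tr A = (\<Sum>k\<in>UNIV. ip (axis k 1) (A *v axis k 1))"
  by (simp add: tr_def ip_axis mv_axis)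

lemma psd_tr_nonneg: "psd A \<Longrightarrow> 0 \<le> Re (tr A)"
  unfolding tr_ip by (simp add: psd_iff sum_nonneg)

lemma mult_diff_left: "((A::complex^'n^'m) - B) ** C = A ** C - B ** C"
  by (simp add: vec_eq_iff matrix_matrix_mult_def sum_subtractf left_diff_distrib)
lemma mult_diff_right: "(C::complex^'n^'m) ** (A - B) = C ** A - C ** B"
  by (simp add: vec_eq_iff matrix_matrix_mult_def sum_subtractf right_diff_distrib)

lemma sum_mv: "(sum f S) *v (w::complex^'n) = (\<Sum>x\<in>S. f x *v w)"
  by (simp add: vec_eq_iff matrix_vector_mult_def sum_distrib_right sum.swap[of _ UNIV S])
lemma scaleR_mv: "(c *\<^sub>R (A::complex^'n^'m)) *v w = c *\<^sub>R (A *v w)"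
  by (simp add: vec_eq_iff matrix_vector_mult_def scaleR_sum_right)

lemma psd_conj:
  assumes "psd A" shows "psd (adj B ** A ** B)"
proof -
  have "hermitian (adj B ** A ** B)"
    using assms by (simp add: psd_iff hermitian_def adj_mult matrix_mul_assoc)
  moreover have "ip v ((adj B ** A ** B) *v v) = ip (B *v v) (A *v (B *v v))" for v
    by (simp add: matrix_vector_mul_assoc[symmetric] ip_adj)
  ultimately show ?thesis using assms by (simp add: psd_iff)
qed


theorem lemma3:
  fixes n :: nat and \<eta> :: "nat \<Rightarrow> real" and \<rho> :: "nat \<Rightarrow> 'd::finite cop"
    and H P :: "'d cop"
  assumes "is_ensemble n \<eta> \<rho>"
    and "H \<in> Hset n \<eta> \<rho>"
    and "tr H = complex_of_real (qG n \<eta> \<rho>)"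
    and "orth_proj_onto P (supp (rho0 n \<eta> \<rho>))"
  shows "P ** H ** P = H"
proof -
  define r0 where "r0 = rho0 n \<eta> \<rho>"
  have eta: "\<And>i. i \<in> {1..n} \<Longrightarrow> \<eta> i > 0" and dens: "\<And>i. i \<in> {1..n} \<Longrightarrow> psd (\<rho> i)"
    using assms(1) by (auto simp: is_ensemble_def density_def)
  have herm_rho: "\<And>i. i \<in> {1..n} \<Longrightarrow> adj (\<rho> i) = \<rho> i"
    using dens by (simp add: psd_iff hermitian_def)
  have Padj: "adj P = P" and PP: "P ** P = P" and Prange: "range (\<lambda>v. P *v v) = supp r0"
    using assms(4) by (auto simp: orth_proj_onto_def hermitian_def r0_def)
  have r0adj: "adj r0 = r0"
    unfolding r0_def rho0_def adj_sum adj_scaleR using herm_rho by (intro sum.cong) auto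
  have Pr0: "P ** r0 = r0"
  proof -
    have "(P ** r0) *v x = r0 *v x" for x
    proof -
      have "r0 *v x \<in> range (\<lambda>v. P *v v)" using Prange by (auto simp: supp_def)
      then obtain y where y: "r0 *v x = P *v y" by auto
      have "(P ** r0) *v x = P *v (P *v y)" by (simp add: matrix_vector_mul_assoc[symmetric] y)
      also have "\<dots> = P *v y" by (simp add: matrix_vector_mul_assoc PP)
      finally show ?thesis using y by simp
    qed
    thus ?thesis by (simp add: matrix_eq)
  qed
  have r0P: "r0 ** P = r0"
    using arg_cong[OF Pr0, of adj] by (simp add: adj_mult Padj r0adj)
  have rhoP: "\<rho> i ** P = \<rho> i" if i: "i \<in> {1..n}" for i
  proof -
    have "\<rho> i *v (x - P *v x) = 0" for x
    proof -
      define w where "w = x - P *v x"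
      have "r0 *v w = 0"
        by (simp add: w_def matrix_vector_mult_diff_distrib matrix_vector_mul_assoc r0P)
      hence "0 = Re (ip w (r0 *v w))" by (simp add: ip_def)
      also have "\<dots> = (\<Sum>j=1..n. \<eta> j * Re (ip w (\<rho> j *v w)))"
        by (simp add: r0_def rho0_def sum_mv scaleR_mv ip_sum_right ip_scaleR_right)
      finally have "(\<Sum>j=1..n. \<eta> j * Re (ip w (\<rho> j *v w))) = 0" by simp
      moreover have "\<forall>j\<in>{1..n}. 0 \<le> \<eta> j * Re (ip w (\<rho> j *v w))"
        using eta dens by (auto simp: psd_iff less_imp_le)
      ultimately have "\<eta> i * Re (ip w (\<rho> i *v w)) = 0"
        using i by (subst (asm) sum_nonneg_eq_0_iff) auto
      hence "Re (ip w (\<rho> i *v w)) = 0" using eta[OF i] by simp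
      thus ?thesis using psd_zero dens[OF i] w_def by blast
    qed
    hence "(\<rho> i ** P) *v x = \<rho> i *v x" for x
      by (metis matrix_vector_mul_assoc matrix_vector_mult_diff_distrib eq_iff_diff_eq_0)
    thus ?thesis by (simp add: matrix_eq)
  qed
  have Prho: "P ** \<rho> i = \<rho> i" if "i \<in> {1..n}" for i
    using arg_cong[OF rhoP[OF that], of adj] by (simp add: adj_mult Padj herm_rho[OF that])
  have PXP: "P ** (c *\<^sub>R r0 - d *\<^sub>R \<rho> i) ** P = c *\<^sub>R r0 - d *\<^sub>R \<rho> i" if "i \<in> {1..n}" for i c d
    by (simp add: mult_diff_left mult_diff_right matrix_scalar_ac scalar_matrix_assoc[symmetric]
        matrix_mul_assoc[symmetric] Prho[OF that] rhoP[OF that] Pr0 r0P)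
  have trcyc: "tr (X ** (P ** F ** P)) = tr ((P ** X ** P) ** F)" for X F :: "'d cop"
  proof -
    have "tr (X ** (P ** F ** P)) = tr ((X ** P ** F) ** P)" by (simp add: matrix_mul_assoc)
    also have "\<dots> = tr (P ** (X ** P ** F))" by (rule tr_comm)
    finally show ?thesis by (simp add: matrix_mul_assoc)
  qed
  define H' where "H' = P ** H ** P"
  have Hpsd: "psd H" and Hdual: "\<And>i. i \<in> {1..n} \<Longrightarrow> H - \<eta> i *\<^sub>R \<rho> i \<in> Mdual n \<eta> \<rho> i"
    using assms(2) by (auto simp: Hset_def)
  have H'psd: "psd H'" using psd_conj[OF Hpsd, of P] by (simp add: H'_def Padj)
  have "H' \<in> Hset n \<eta> \<rho>"
    unfolding Hset_def
  proof (intro CollectI conjI ballI H'psd)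
    fix i assume i: "i \<in> {1..n}"
    have herm: "hermitian (H' - \<eta> i *\<^sub>R \<rho> i)"
      using H'psd by (simp add: psd_iff hermitian_def adj_diff adj_scaleR herm_rho[OF i])
    have "0 \<le> Re (tr ((H' - \<eta> i *\<^sub>R \<rho> i) ** F))" if F: "F \<in> Mset n \<eta> \<rho> i" for F
    proof -
      have Fpsd: "psd F" and F0: "tr ((Cmax n \<eta> \<rho> i *\<^sub>R r0 - \<eta> i *\<^sub>R \<rho> i) ** F) = 0"
        using F by (auto simp: Mset_def r0_def)
      have "P ** F ** P \<in> Mset n \<eta> \<rho> i"
        unfolding Mset_def
        using psd_conj[OF Fpsd, of P] F0 by (simp add: Padj trcyc PXP[OF i] r0_def[symmetric])
      hence "0 \<le> Re (tr ((H - \<eta> i *\<^sub>R \<rho> i) ** (P ** F ** P)))"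
        using Hdual[OF i] by (auto simp: Mdual_def)
      also have "tr ((H - \<eta> i *\<^sub>R \<rho> i) ** (P ** F ** P)) = tr ((H' - \<eta> i *\<^sub>R \<rho> i) ** F)"
      proof -
        have "P ** (H - \<eta> i *\<^sub>R \<rho> i) ** P = H' - \<eta> i *\<^sub>R \<rho> i"
          by (simp add: H'_def mult_diff_left mult_diff_right matrix_scalar_ac scalar_matrix_assoc[symmetric]
            matrix_mul_assoc[symmetric] Prho[OF i] rhoP[OF i])
        thus ?thesis by (simp only: trcyc)
      qed
      finally show ?thesis .
    qed
    thus "H' - \<eta> i *\<^sub>R \<rho> i \<in> Mdual n \<eta> \<rho> i" using herm by (simp add: Mdual_def)
  qed
  hence "qG n \<eta> \<rho> \<le> Re (tr H')"
    unfolding qG_def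
    by (intro cInf_lower) (auto simp: bdd_below_def Hset_def intro!: exI[of _ 0] psd_tr_nonneg)
  hence le: "Re (tr H) \<le> Re (tr H')" using assms(3) by simp
  define Q where "Q = mat 1 - P"
  have Qadj: "adj Q = Q" by (simp add: Q_def adj_diff adj_mat1 Padj)
  have QQ: "Q ** Q = Q" by (simp add: Q_def mult_diff_left mult_diff_right PP)
  have "tr (Q ** H ** Q) = tr (H ** (Q ** Q))"
    by (metis tr_comm matrix_mul_assoc)
  also have "\<dots> = tr H - tr H'"
  proof -
    have "tr H' = tr (H ** P)"
      by (metis H'_def tr_comm matrix_mul_assoc PP)
    moreover have "tr (H ** (Q ** Q)) = tr (H ** Q)" by (simp only: QQ)
    moreover have "tr (H ** Q) = tr H - tr (H ** P)" by (simp add: Q_def mult_diff_right tr_diff)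
    ultimately show ?thesis by simp
  qed
  finally have "Re (tr (Q ** H ** Q)) \<le> 0" using le by simp
  moreover have QHQ: "psd (Q ** H ** Q)" using psd_conj[OF Hpsd, of Q] by (simp add: Qadj)
  ultimately have "Re (tr (Q ** H ** Q)) = 0" using psd_tr_nonneg by fastforce
  hence "(\<Sum>k\<in>UNIV. Re (ip (axis k 1) ((Q ** H ** Q) *v axis k 1))) = 0"
    by (simp add: tr_ip)
  moreover have "\<forall>k\<in>UNIV. 0 \<le> Re (ip (axis k 1) ((Q ** H ** Q) *v axis k 1))"
    using QHQ by (simp add: psd_iff)
  ultimately have z: "Re (ip (axis k 1) ((Q ** H ** Q) *v axis k 1)) = 0" for k
    by (subst (asm) sum_nonneg_eq_0_iff) auto
  have HQ0: "H ** Q = 0"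
  proof -
    have "(H ** Q) *v axis k 1 = 0" for k
    proof -
      have "ip (axis k 1) ((Q ** H ** Q) *v axis k 1) = ip (Q *v axis k 1) (H *v (Q *v axis k 1))"
        by (simp add: matrix_vector_mul_assoc[symmetric] ip_adj Qadj)
      hence "H *v (Q *v axis k 1) = 0" using z[of k] psd_zero[OF Hpsd] by simp
      thus ?thesis by (simp add: matrix_vector_mul_assoc)
    qed
    hence "(H ** Q) $ i $ k = 0" for i k using mv_axis[of "H ** Q" k i] by simp
    thus ?thesis by (simp add: vec_eq_iff)
  qed
  hence HP: "H ** P = H" by (simp add: Q_def mult_diff_right)
  have PH: "P ** H = H"
    using arg_cong[OF HP, of adj] Hpsd by (simp add: adj_mult Padj psd_iff hermitian_def)
  show ?thesis by (simp add: PH HP)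
qed

end
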